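(* For every integer $N\ge 0$, let $T(N)$ be the number of tilings of a $2\times 3\times N$ box by $N$ bricks of size $1\times 2\times 3$. Then, as formal power series, \[ \sum_{N\ge 0} T(N)\,z^N=\frac{1}{1-z-z^2-3z^3}. \]
   Context: A tiling of a $k\times m\times n$ box (made of $kmn$ unit cubes) by $a\times b\times c$ bricks is a partition of the box into non-overlapping axis-parallel boxes with integer corner coordinates, each congruent (by an axis-permuting placement) to the $a\times b\times c$ brick; all orientations are allowed. Tilings related by symmetries of the box are counted as distinct. The empty tiling counts once for $N=0$. *)

theory Defs
  imports "HOL-Computational_Algebra.Formal_Power_Series"
begin

type_synonym cell = "nat \<times> nat \<times> nat"

text \<open>A brick placement: lower corner and side lengths along the three axes.\<close>
type_synonym placement = "cell \<times> (nat \<times> nat \<times> nat)"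

definition box :: "nat \<Rightarrow> nat \<Rightarrow> nat \<Rightarrow> cell set" where
  "box k m n = {(x, y, z). x < k \<and> y < m \<and> z < n}"

fun brick_cells :: "placement \<Rightarrow> cell set" where
  "brick_cells ((x, y, z), (d1, d2, d3)) =
     {(i, j, l). x \<le> i \<and> i < x + d1 \<and> y \<le> j \<and> j < y + d2 \<and> z \<le> l \<and> l < z + d3}"

definition orientations :: "nat \<Rightarrow> nat \<Rightarrow> nat \<Rightarrow> (nat \<times> nat \<times> nat) set" where
  "orientations a b c = {(a, b, c), (a, c, b), (b, a, c), (b, c, a), (c, a, b), (c, b, a)}"

definition is_tiling :: "nat \<Rightarrow> nat \<Rightarrow> nat \<Rightarrow> nat \<Rightarrow> nat \<Rightarrow> nat \<Rightarrow> placement set \<Rightarrow> bool" where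
  "is_tiling a b c k m n P \<longleftrightarrow>
     finite P \<and>
     (\<forall>p\<in>P. snd p \<in> orientations a b c) \<and>
     (\<forall>p\<in>P. \<forall>q\<in>P. p \<noteq> q \<longrightarrow> brick_cells p \<inter> brick_cells q = {}) \<and>
     (\<Union>p\<in>P. brick_cells p) = box k m n"

definition num_tilings :: "nat \<Rightarrow> nat \<Rightarrow> nat \<Rightarrow> nat \<Rightarrow> nat \<Rightarrow> nat \<Rightarrow> nat" where
  "num_tilings a b c k m n = card {P. is_tiling a b c k m n P}"

end

theory Submission
  imports Defs
begin

unbundle fps_syntax

abbreviation til :: "nat \<Rightarrow> placement set \<Rightarrow> bool" where
  "til M Q \<equiv> is_tiling 1 2 3 2 3 M Q"
abbreviation TT :: "nat \<Rightarrow> nat" where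
  "TT N \<equiv> num_tilings 1 2 3 2 3 N"

lemma orient: "orientations 1 2 3 = {(1,2,3),(1,3,2),(2,1,3),(2,3,1),(3,1,2),(3,2,1)}"
  by (auto simp: orientations_def)

lemma orient': "orientations (Suc 0) 2 3 = {(1,2,3),(1,3,2),(2,1,3),(2,3,1),(3,1,2),(3,2,1)}"
  by (auto simp: orientations_def)

lemma corner_in: "snd p \<in> orientations 1 2 3 \<Longrightarrow> fst p \<in> brick_cells p"
  by (cases p) (auto simp: orient orient')

lemma mem_box: "(i,j,l) \<in> box k m n \<longleftrightarrow> i < k \<and> j < m \<and> l < n"
  by (simp add: box_def)

lemma til_sub: "til M Q \<Longrightarrow> p \<in> Q \<Longrightarrow> c \<in> brick_cells p \<Longrightarrow> c \<in> box 2 3 M"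
  unfolding is_tiling_def by blast
lemma til_cov: "til M Q \<Longrightarrow> c \<in> box 2 3 M \<Longrightarrow> \<exists>p\<in>Q. c \<in> brick_cells p"
  unfolding is_tiling_def by blast
lemma til_disj: "til M Q \<Longrightarrow> p \<in> Q \<Longrightarrow> q \<in> Q \<Longrightarrow> c \<in> brick_cells p \<Longrightarrow> c \<in> brick_cells q \<Longrightarrow> p = q"
  unfolding is_tiling_def by blast
lemma til_or: "til M Q \<Longrightarrow> p \<in> Q \<Longrightarrow> snd p \<in> orientations 1 2 3"
  unfolding is_tiling_def by blast

lemma cover:
  assumes T: "til M Q" and "i < 2" "j < 3" "l < M"
  shows "\<exists>x y z d1 d2 d3. ((x,y,z),(d1,d2,d3)) \<in> Q \<and> x \<le> i \<and> i < x+d1 \<and> y \<le> j \<and> j < y+d2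
     \<and> z \<le> l \<and> l < z+d3 \<and> x+d1 \<le> 2 \<and> y+d2 \<le> 3 \<and> z+d3 \<le> M \<and>
     ((d1,d2,d3) = (1,2,3) \<or> (d1,d2,d3) = (1,3,2) \<or> (d1,d2,d3) = (2,1,3) \<or> (d1,d2,d3) = (2,3,1))"
proof -
  obtain p where p: "p \<in> Q" "(i,j,l) \<in> brick_cells p"
    using til_cov[OF T, of "(i,j,l)"] assms by (auto simp: mem_box)
  obtain x y z d1 d2 d3 where pe: "p = ((x,y,z),(d1,d2,d3))" by (metis prod.exhaust)
  have o: "(d1,d2,d3) \<in> orientations 1 2 3" using til_or[OF T p(1)] pe by simp
  then have pos: "d1 \<ge> 1" "d2 \<ge> 1" "d3 \<ge> 1" by (auto simp: orient orient')
  have "(x+d1-1, y+d2-1, z+d3-1) \<in> brick_cells p" using pos by (simp add: pe) arith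
  then have "(x+d1-1, y+d2-1, z+d3-1) \<in> box 2 3 M" using til_sub[OF T p(1)] by blast
  then have b: "x+d1 \<le> 2" "y+d2 \<le> 3" "z+d3 \<le> M" using pos by (auto simp: mem_box)
  show ?thesis
    apply (rule exI[of _ x], rule exI[of _ y], rule exI[of _ z], rule exI[of _ d1], rule exI[of _ d2], rule exI[of _ d3])
    using p pe b o by (auto simp: orient orient')
qed

definition sh :: "nat \<Rightarrow> placement \<Rightarrow> placement" where
  "sh d p = (case p of ((x,y,z),dm) \<Rightarrow> ((x,y,z+d),dm))"

lemma cells_sh: "(i,j,l) \<in> brick_cells (sh d p) \<longleftrightarrow> d \<le> l \<and> (i,j,l-d) \<in> brick_cells p"
  by (cases p) (auto simp: sh_def)

lemma snd_sh[simp]: "snd (sh d p) = snd p"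
  by (cases p) (auto simp: sh_def)

lemma inj_sh: "inj (sh d)"
  unfolding inj_def sh_def by auto

lemma fst_sh: "fst (sh d p) = (case fst p of (x,y,z) \<Rightarrow> (x,y,z+d))"
  by (cases p) (auto simp: sh_def)

definition cfg :: "nat \<Rightarrow> placement set \<Rightarrow> bool" where
  "cfg d C \<longleftrightarrow> finite C \<and> (\<forall>p\<in>C. snd p \<in> orientations 1 2 3) \<and>
     (\<forall>p\<in>C. \<forall>q\<in>C. p \<noteq> q \<longrightarrow> brick_cells p \<inter> brick_cells q = {}) \<and>
     (\<Union>p\<in>C. brick_cells p) = box 2 3 d"

lemma cfg_le:
  assumes "cfg d C" "til M Q" "C \<subseteq> Q" "d \<ge> 1"
  shows "d \<le> M"
proof -
  have "(0,0,d-1) \<in> box 2 3 d" using assms(4) by (simp add: mem_box)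
  then obtain p where "p \<in> C" "(0,0,d-1) \<in> brick_cells p" using assms(1) unfolding cfg_def by blast
  then have "(0,0,d-1) \<in> box 2 3 M" using til_sub[OF assms(2)] assms(3) by blast
  then show ?thesis using assms(4) by (simp add: mem_box)
qed

lemma cfg_img:
  assumes C: "cfg d C"
  shows "{Q. til (N+d) Q \<and> C \<subseteq> Q} = (\<lambda>P. C \<union> sh d ` P) ` {P. til N P}"
proof (intro equalityI subsetI)
  have Cf: "finite C" and Co: "\<And>p. p \<in> C \<Longrightarrow> snd p \<in> orientations 1 2 3"
    and Cd: "\<And>p q. p \<in> C \<Longrightarrow> q \<in> C \<Longrightarrow> p \<noteq> q \<Longrightarrow> brick_cells p \<inter> brick_cells q = {}"
    and Cu: "(\<Union>p\<in>C. brick_cells p) = box 2 3 d" using C unfolding cfg_def by auto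
  fix Q assume "Q \<in> {Q. til (N+d) Q \<and> C \<subseteq> Q}"
  then have T: "til (N+d) Q" and CQ: "C \<subseteq> Q" by auto
  define P where "P = {p. sh d p \<in> Q}"
  have hi: "\<exists>q'. q = sh d q'" if "q \<in> Q" "q \<notin> C" for q
  proof -
    obtain x y z dm where qe: "q = ((x,y,z),dm)" by (metis prod.exhaust)
    have "fst q \<in> brick_cells q" using corner_in til_or[OF T that(1)] by blast
    then have cb: "(x,y,z) \<in> box 2 3 (N+d)" using til_sub[OF T that(1)] qe by auto
    have "d \<le> z"
    proof (rule ccontr)
      assume "\<not> d \<le> z"
      then have "(x,y,z) \<in> box 2 3 d" using cb by (simp add: mem_box)
      then have "(x,y,z) \<in> (\<Union>p\<in>C. brick_cells p)" by (simp only: Cu)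
      then obtain p where "p \<in> C" "(x,y,z) \<in> brick_cells p" by blast
      moreover have "(x,y,z) \<in> brick_cells q" using \<open>fst q \<in> brick_cells q\<close> qe by simp
      ultimately have "p = q" using til_disj[OF T, of p q] CQ that(1) by blast
      then show False using that \<open>p \<in> C\<close> by simp
    qed
    then have "q = sh d ((x,y,z-d),dm)" by (simp add: qe sh_def)
    then show ?thesis by blast
  qed
  have QE: "Q = C \<union> sh d ` P"
  proof
    show "Q \<subseteq> C \<union> sh d ` P"
    proof
      fix q assume "q \<in> Q"
      show "q \<in> C \<union> sh d ` P"
      proof (cases "q \<in> C")
        case False
        then obtain q' where "q = sh d q'" using hi \<open>q \<in> Q\<close> by blast
        then show ?thesis using \<open>q \<in> Q\<close> by (auto simp: P_def)
      qed simp
    qed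
    show "C \<union> sh d ` P \<subseteq> Q" using CQ by (auto simp: P_def)
  qed
  have "til N P"
    unfolding is_tiling_def
  proof (intro conjI ballI impI)
    have "finite Q" using T unfolding is_tiling_def by blast
    moreover have "P = sh d -` Q" by (auto simp: P_def)
    ultimately show "finite P" using finite_vimageI[OF _ inj_sh] by simp
  next
    fix p assume "p \<in> P" then have "sh d p \<in> Q" by (simp add: P_def)
    from til_or[OF T this] show "snd p \<in> orientations 1 2 3" by simp
  next
    fix p q assume pq: "p \<in> P" "q \<in> P" "p \<noteq> q"
    show "brick_cells p \<inter> brick_cells q = {}"
    proof (rule ccontr)
      assume "brick_cells p \<inter> brick_cells q \<noteq> {}"
      then obtain i j l where c: "(i,j,l) \<in> brick_cells p" "(i,j,l) \<in> brick_cells q" by auto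
      then have "(i,j,l+d) \<in> brick_cells (sh d p)" "(i,j,l+d) \<in> brick_cells (sh d q)" by (auto simp: cells_sh)
      then have "sh d p = sh d q" using til_disj[OF T] pq by (auto simp: P_def)
      then show False using pq inj_sh by (metis injD)
    qed
  next
    show "(\<Union>p\<in>P. brick_cells p) = box 2 3 N"
    proof (intro equalityI subsetI)
      fix c assume "c \<in> (\<Union>p\<in>P. brick_cells p)"
      then obtain p where p: "p \<in> P" "c \<in> brick_cells p" by blast
      obtain i j l where ce: "c = (i,j,l)" by (metis prod.exhaust)
      have "(i,j,l+d) \<in> brick_cells (sh d p)" using p ce by (simp add: cells_sh)
      then have "(i,j,l+d) \<in> box 2 3 (N+d)" using til_sub[OF T] p by (auto simp: P_def)
      then show "c \<in> box 2 3 N" by (simp add: ce mem_box)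
    next
      fix c assume cb: "c \<in> box 2 3 N"
      obtain i j l where ce: "c = (i,j,l)" by (metis prod.exhaust)
      have "(i,j,l+d) \<in> box 2 3 (N+d)" using cb ce by (simp add: mem_box)
      then obtain q where q: "q \<in> Q" "(i,j,l+d) \<in> brick_cells q" using til_cov[OF T] by blast
      have "q \<notin> C"
      proof
        assume "q \<in> C"
        then have "(i,j,l+d) \<in> box 2 3 d" using Cu q by blast
        then show False by (simp add: mem_box)
      qed
      then obtain q' where qq: "q = sh d q'" using hi q by blast
      then have "q' \<in> P" using q by (simp add: P_def)
      moreover have "c \<in> brick_cells q'" using q qq ce by (simp add: cells_sh)
      ultimately show "c \<in> (\<Union>p\<in>P. brick_cells p)" by blast
    qed
  qed
  then show "Q \<in> (\<lambda>P. C \<union> sh d ` P) ` {P. til N P}" using QE by blast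
next
  have Cf: "finite C" and Co: "\<And>p. p \<in> C \<Longrightarrow> snd p \<in> orientations 1 2 3"
    and Cd: "\<And>p q. p \<in> C \<Longrightarrow> q \<in> C \<Longrightarrow> p \<noteq> q \<Longrightarrow> brick_cells p \<inter> brick_cells q = {}"
    and Cu: "(\<Union>p\<in>C. brick_cells p) = box 2 3 d" using C unfolding cfg_def by auto
  fix Q assume "Q \<in> (\<lambda>P. C \<union> sh d ` P) ` {P. til N P}"
  then obtain P where T: "til N P" and QE: "Q = C \<union> sh d ` P" by auto
  have Cl: "l < d" if "p \<in> C" "(i,j,l) \<in> brick_cells p" for p i j l
  proof -
    have "(i,j,l) \<in> box 2 3 d" using that Cu by blast
    then show ?thesis by (simp add: mem_box)
  qed
  have "til (N+d) Q"
    unfolding is_tiling_def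
  proof (intro conjI ballI impI)
    show "finite Q" using T Cf QE unfolding is_tiling_def by blast
  next
    fix p assume "p \<in> Q"
    then consider "p \<in> C" | p' where "p' \<in> P" "p = sh d p'" using QE by blast
    then show "snd p \<in> orientations 1 2 3"
    proof cases
      case 1 then show ?thesis by (rule Co)
    next
      case (2 p') then show ?thesis using til_or[OF T 2(1)] by simp
    qed
  next
    fix p q assume pq: "p \<in> Q" "q \<in> Q" "p \<noteq> q"
    show "brick_cells p \<inter> brick_cells q = {}"
    proof (rule ccontr)
      assume "brick_cells p \<inter> brick_cells q \<noteq> {}"
      then obtain i j l where c: "(i,j,l) \<in> brick_cells p" "(i,j,l) \<in> brick_cells q" by auto
      consider "p \<in> C" "q \<in> C" | "p \<in> C" "q \<in> sh d ` P" | "p \<in> sh d ` P" "q \<in> C" | "p \<in> sh d ` P" "q \<in> sh d ` P"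
        using pq QE by blast
      then show False
      proof cases
        case 1 then show ?thesis using Cd pq c by blast
      next
        case 2
        then obtain q' where "q = sh d q'" by blast
        then have "d \<le> l" using c(2) by (simp add: cells_sh)
        then show ?thesis using Cl[OF 2(1) c(1)] by simp
      next
        case 3
        then obtain p' where "p = sh d p'" by blast
        then have "d \<le> l" using c(1) by (simp add: cells_sh)
        then show ?thesis using Cl[OF 3(2) c(2)] by simp
      next
        case 4
        then obtain p' q' where e: "p = sh d p'" "q = sh d q'" "p' \<in> P" "q' \<in> P" by blast
        then have "p' \<noteq> q'" using pq by blast
        moreover have "(i,j,l-d) \<in> brick_cells p'" "(i,j,l-d) \<in> brick_cells q'" using c e by (auto simp: cells_sh)
        ultimately show False using til_disj[OF T] e by blast
      qed
    qed
  next
    show "(\<Union>p\<in>Q. brick_cells p) = box 2 3 (N+d)"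
    proof (intro equalityI subsetI)
      fix c assume "c \<in> (\<Union>p\<in>Q. brick_cells p)"
      then obtain p where p: "p \<in> Q" "c \<in> brick_cells p" by blast
      obtain i j l where ce: "c = (i,j,l)" by (metis prod.exhaust)
      show "c \<in> box 2 3 (N+d)"
      proof (cases "p \<in> C")
        case True
        then have "(i,j,l) \<in> box 2 3 d" using Cu p ce by blast
        then show ?thesis using ce by (simp add: mem_box)
      next
        case False
        then obtain p' where e: "p = sh d p'" "p' \<in> P" using p QE by blast
        then have "d \<le> l" "(i,j,l-d) \<in> brick_cells p'" using p ce by (auto simp: cells_sh)
        then have "(i,j,l-d) \<in> box 2 3 N" using til_sub[OF T e(2)] by blast
        then show ?thesis using ce \<open>d \<le> l\<close> by (auto simp: mem_box)
      qed
    next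
      fix c assume cb: "c \<in> box 2 3 (N+d)"
      obtain i j l where ce: "c = (i,j,l)" by (metis prod.exhaust)
      show "c \<in> (\<Union>p\<in>Q. brick_cells p)"
      proof (cases "l < d")
        case True
        then have "c \<in> box 2 3 d" using cb ce by (simp add: mem_box)
        then show ?thesis using Cu QE by blast
      next
        case False
        then have "(i,j,l-d) \<in> box 2 3 N" using cb ce by (auto simp: mem_box)
        then obtain p where "p \<in> P" "(i,j,l-d) \<in> brick_cells p" using til_cov[OF T] by blast
        then have "sh d p \<in> Q" "c \<in> brick_cells (sh d p)" using False ce QE by (auto simp: cells_sh)
        then show ?thesis by blast
      qed
    qed
  qed
  then show "Q \<in> {Q. til (N+d) Q \<and> C \<subseteq> Q}" using QE by blast
qed

lemma cfg_inj:
  assumes C: "cfg d C"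
  shows "inj_on (\<lambda>P. C \<union> sh d ` P) {P. til N P}"
proof -
  have Cu: "(\<Union>p\<in>C. brick_cells p) = box 2 3 d" using C unfolding cfg_def by auto
  have dis: "sh d ` P \<inter> C = {}" if T: "til N P" for P
  proof (rule ccontr)
    assume "sh d ` P \<inter> C \<noteq> {}"
    then obtain p where p: "p \<in> P" "sh d p \<in> C" by blast
    obtain x y z dm where pe: "p = ((x,y,z),dm)" by (metis prod.exhaust)
    have "fst p \<in> brick_cells p" using corner_in til_or[OF T p(1)] by blast
    then have "(x,y,z+d) \<in> brick_cells (sh d p)" using pe by (simp add: cells_sh)
    then have "(x,y,z+d) \<in> box 2 3 d" using Cu p(2) by blast
    then show False by (simp add: mem_box)
  qed
  show ?thesis
  proof (rule inj_onI)
    fix P1 P2 assume a: "P1 \<in> {P. til N P}" "P2 \<in> {P. til N P}" "C \<union> sh d ` P1 = C \<union> sh d ` P2"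
    then have "sh d ` P1 = sh d ` P2" using dis[of P1] dis[of P2] by blast
    then show "P1 = P2" using inj_sh by (simp add: inj_image_eq_iff)
  qed
qed

lemma fin_til: "finite {Q. til M Q}"
proof -
  have sub: "{Q. til M Q} \<subseteq> Pow (box 2 3 M \<times> orientations 1 2 3)"
  proof
    fix Q assume "Q \<in> {Q. til M Q}"
    then have T: "til M Q" by simp
    show "Q \<in> Pow (box 2 3 M \<times> orientations 1 2 3)"
    proof (rule PowI, rule subsetI)
      fix p assume p: "p \<in> Q"
      have "fst p \<in> box 2 3 M" using corner_in[OF til_or[OF T p]] til_sub[OF T p] by blast
      then show "p \<in> box 2 3 M \<times> orientations 1 2 3" using til_or[OF T p] by (cases p) auto
    qed
  qed
  have "box 2 3 M = {..<2} \<times> {..<3} \<times> {..<M}" by (auto simp: box_def)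
  then have "finite (Pow (box 2 3 M \<times> orientations 1 2 3))" by (simp add: orient orient')
  then show ?thesis using sub by (rule finite_subset[rotated])
qed

lemma cfg_card:
  assumes C: "cfg d C" and d: "d \<ge> 1"
  shows "card {Q. til M Q \<and> C \<subseteq> Q} = (if d \<le> M then TT (M - d) else 0)"
proof (cases "d \<le> M")
  case True
  then have M: "M = (M - d) + d" by simp
  have "card {Q. til M Q \<and> C \<subseteq> Q} = card ((\<lambda>P. C \<union> sh d ` P) ` {P. til (M-d) P})"
    using cfg_img[OF C, of "M-d"] M by metis
  also have "\<dots> = TT (M-d)" using card_image[OF cfg_inj[OF C]] by (simp add: num_tilings_def)
  finally show ?thesis using True by simp
next
  case False
  have E: "{Q. til M Q \<and> C \<subseteq> Q} = {}" using cfg_le[OF C _ _ d] False by auto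
  show ?thesis unfolding E using False by simp
qed


definition C1 :: "placement set" where "C1 = {((0,0,0),(2,3,1))}"
definition C2 :: "placement set" where "C2 = {((0,0,0),(1,3,2)), ((1,0,0),(1,3,2))}"
definition C3 :: "placement set" where "C3 = {((0,0,0),(2,1,3)), ((0,1,0),(2,1,3)), ((0,2,0),(2,1,3))}"
definition C4 :: "placement set" where "C4 = {((0,0,0),(1,2,3)), ((1,0,0),(1,2,3)), ((0,2,0),(2,1,3))}"
definition C5 :: "placement set" where "C5 = {((0,0,0),(2,1,3)), ((0,1,0),(1,2,3)), ((1,1,0),(1,2,3))}"

lemma less2: "(i::nat) < 2 \<longleftrightarrow> i = 0 \<or> i = 1" by auto
lemma less3: "(i::nat) < 3 \<longleftrightarrow> i = 0 \<or> i = 1 \<or> i = 2" by auto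

lemma cfg1: "cfg 1 C1"
  unfolding cfg_def C1_def by (auto simp: orient orient' box_def)
lemma cfg2: "cfg 2 C2"
  unfolding cfg_def C2_def by (auto simp: orient orient' box_def less2)
lemma cfg3: "cfg 3 C3"
  unfolding cfg_def C3_def by (auto simp: orient orient' box_def less3)
lemma cfg4: "cfg 3 C4"
  unfolding cfg_def C4_def by (auto simp: orient orient' box_def less2 less3)
lemma cfg5: "cfg 3 C5"
  unfolding cfg_def C5_def by (auto simp: orient orient' box_def less2 less3)


lemma cov0:
  assumes T: "til M Q" and "i < 2" "j < 3" "1 \<le> M"
  shows "\<exists>x y d1 d2 d3. ((x,y,0),(d1,d2,d3)) \<in> Q \<and> x \<le> i \<and> i < x+d1 \<and> y \<le> j \<and> j < y+d2
     \<and> x+d1 \<le> 2 \<and> y+d2 \<le> 3 \<and> d3 \<le> M \<and>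
     ((d1,d2,d3) = (1,2,3) \<or> (d1,d2,d3) = (1,3,2) \<or> (d1,d2,d3) = (2,1,3) \<or> (d1,d2,d3) = (2,3,1))"
proof -
  have "0 < M" using assms by simp
  from cover[OF T assms(2) assms(3) this] show ?thesis
  proof (elim exE conjE)
    fix x y z d1 d2 d3 assume H: "((x,y,z),(d1,d2,d3)) \<in> Q" "x \<le> i" "i < x+d1" "y \<le> j" "j < y+d2"
      "z \<le> 0" "0 < z+d3" "x+d1 \<le> 2" "y+d2 \<le> 3" "z+d3 \<le> M"
      "(d1,d2,d3) = (1,2,3) \<or> (d1,d2,d3) = (1,3,2) \<or> (d1,d2,d3) = (2,1,3) \<or> (d1,d2,d3) = (2,3,1)"
    then have z: "z = 0" by simp
    show ?thesis
      apply (rule exI[of _ x], rule exI[of _ y], rule exI[of _ d1], rule exI[of _ d2], rule exI[of _ d3])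
      using H z by simp
  qed
qed

lemma exh:
  assumes T: "til M Q" and M: "1 \<le> M"
  shows "C1 \<subseteq> Q \<or> C2 \<subseteq> Q \<or> C3 \<subseteq> Q \<or> C4 \<subseteq> Q \<or> C5 \<subseteq> Q"
proof -
  have S: "\<And>p q c. p \<in> Q \<Longrightarrow> q \<in> Q \<Longrightarrow> c \<in> brick_cells p \<Longrightarrow> c \<in> brick_cells q \<Longrightarrow> p = q"
    using til_disj[OF T] by blast
  obtain x0 y0 d1 d2 d3 where p0: "((x0,y0,0),(d1,d2,d3)) \<in> Q" and h0: "x0 \<le> 0" "y0 \<le> 0" "d3 \<le> M"
    and o0: "(d1,d2,d3) = (1,2,3) \<or> (d1,d2,d3) = (1,3,2) \<or> (d1,d2,d3) = (2,1,3) \<or> (d1,d2,d3) = (2,3,1)"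
    using cov0[OF T, of 0 0] M by auto
  have x0: "x0 = 0" and y0: "y0 = 0" using h0 by auto
  from o0 consider (A) "(d1,d2,d3) = (2,3,1)" | (B) "(d1,d2,d3) = (1,3,2)" | (C) "(d1,d2,d3) = (2,1,3)"
     | (D) "(d1,d2,d3) = (1,2,3)" by blast
  then show ?thesis
  proof cases
    case A
    then have "C1 \<subseteq> Q" using p0 x0 y0 by (simp add: C1_def)
    then show ?thesis by blast
  next
    case B
    then have p0: "((0,0,0),(1,3,2)) \<in> Q" using p0 x0 y0 by simp
    obtain x1 y1 e1 e2 e3 where p1: "((x1,y1,0),(e1,e2,e3)) \<in> Q" and h1: "x1 \<le> 1" "1 < x1+e1" "y1 \<le> 0"
      "x1+e1 \<le> 2" "y1+e2 \<le> 3" "e3 \<le> M"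
      and o1: "(e1,e2,e3) = (1,2,3) \<or> (e1,e2,e3) = (1,3,2) \<or> (e1,e2,e3) = (2,1,3) \<or> (e1,e2,e3) = (2,3,1)"
      using cov0[OF T, of 1 0] M by auto
    have y1: "y1 = 0" using h1 by simp
    have x1: "x1 = 1"
    proof (rule ccontr)
      assume "x1 \<noteq> 1" then have "x1 = 0" using h1 by simp
      then have "((x1,y1,0),(e1,e2,e3)) = ((0,0,0),(1,3,2))" using S[OF p1 p0, of "(0,0,0)"] y1 o1 by auto
      then show False using h1 \<open>x1 = 0\<close> by simp
    qed
    have e1: "e1 = 1" using h1 x1 o1 by auto
    have e: "(e1,e2,e3) = (1,3,2)"
    proof (rule ccontr)
      assume "(e1,e2,e3) \<noteq> (1,3,2)"
      then have ee: "(e1,e2,e3) = (1,2,3)" using o1 e1 by auto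
      obtain x2 y2 f1 f2 f3 where p2: "((x2,y2,0),(f1,f2,f3)) \<in> Q" and h2: "x2 \<le> 1" "1 < x2+f1" "y2 \<le> 2"
        "2 < y2 + f2" "x2+f1 \<le> 2" "y2+f2 \<le> 3"
        and o2: "(f1,f2,f3) = (1,2,3) \<or> (f1,f2,f3) = (1,3,2) \<or> (f1,f2,f3) = (2,1,3) \<or> (f1,f2,f3) = (2,3,1)"
        using cov0[OF T, of 1 2] M by auto
      have x2: "x2 = 1"
      proof (rule ccontr)
        assume "x2 \<noteq> 1" then have "x2 = 0" using h2 by simp
        then have "((x2,y2,0),(f1,f2,f3)) = ((0,0,0),(1,3,2))" using S[OF p2 p0, of "(0,2,0)"] h2 o2 by auto
        then show False using h2 \<open>x2 = 0\<close> by simp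
      qed
      have "y2 \<le> 1" using h2 x2 o2 by auto
      then have "((x2,y2,0),(f1,f2,f3)) = ((x1,y1,0),(e1,e2,e3))" using S[OF p2 p1, of "(1,1,0)"] h2 x2 o2 x1 y1 ee by auto
      then show False using h2 ee y1 by simp
    qed
    have "C2 \<subseteq> Q" using p0 p1 x1 y1 e by (simp add: C2_def)
    then show ?thesis by blast
  next
    case C
    then have p0: "((0,0,0),(2,1,3)) \<in> Q" using p0 x0 y0 by simp
    obtain x1 y1 e1 e2 e3 where p1: "((x1,y1,0),(e1,e2,e3)) \<in> Q" and h1: "x1 \<le> 0" "y1 \<le> 1" "1 < y1+e2"
      "x1+e1 \<le> 2" "y1+e2 \<le> 3" "e3 \<le> M"
      and o1: "(e1,e2,e3) = (1,2,3) \<or> (e1,e2,e3) = (1,3,2) \<or> (e1,e2,e3) = (2,1,3) \<or> (e1,e2,e3) = (2,3,1)"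
      using cov0[OF T, of 0 1] M by auto
    have x1: "x1 = 0" using h1 by simp
    have y1: "y1 = 1"
    proof (rule ccontr)
      assume "y1 \<noteq> 1" then have "y1 = 0" using h1 by simp
      then have "((x1,y1,0),(e1,e2,e3)) = ((0,0,0),(2,1,3))" using S[OF p1 p0, of "(0,0,0)"] x1 o1 by auto
      then show False using h1 \<open>y1 = 0\<close> by simp
    qed
    have "(e1,e2,e3) = (2,1,3) \<or> (e1,e2,e3) = (1,2,3)" using o1 h1 y1 by auto
    then show ?thesis
    proof
      assume ee: "(e1,e2,e3) = (2,1,3)"
      obtain x2 y2 f1 f2 f3 where p2: "((x2,y2,0),(f1,f2,f3)) \<in> Q" and h2: "x2 \<le> 0" "y2 \<le> 2"
        "2 < y2 + f2" "x2+f1 \<le> 2" "y2+f2 \<le> 3"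
        and o2: "(f1,f2,f3) = (1,2,3) \<or> (f1,f2,f3) = (1,3,2) \<or> (f1,f2,f3) = (2,1,3) \<or> (f1,f2,f3) = (2,3,1)"
        using cov0[OF T, of 0 2] M by auto
      have y2: "y2 = 2"
      proof (rule ccontr)
        assume "y2 \<noteq> 2"
        then have "y2 = 0 \<or> y2 = 1" using h2 by auto
        then show False
        proof
          assume "y2 = 0"
          then have "((x2,y2,0),(f1,f2,f3)) = ((0,0,0),(2,1,3))" using S[OF p2 p0, of "(0,0,0)"] h2 o2 by auto
          then show False using h2 \<open>y2 = 0\<close> by simp
        next
          assume "y2 = 1"
          then have "((x2,y2,0),(f1,f2,f3)) = ((x1,y1,0),(e1,e2,e3))" using S[OF p2 p1, of "(0,1,0)"] h2 o2 x1 y1 ee by auto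
          then show False using h2 ee \<open>y2 = 1\<close> by simp
        qed
      qed
      have f: "(f1,f2,f3) = (2,1,3)" using o2 h2 y2 by auto
      have "((x2,y2,0),(f1,f2,f3)) = ((0,2,0),(2,1,3))" using f h2 y2 by simp
      then have p2': "((0,2,0),(2,1,3)) \<in> Q" using p2 by metis
      have p1': "((0,1,0),(2,1,3)) \<in> Q" using p1 x1 y1 ee by simp
      have "C3 \<subseteq> Q" using p0 p1' p2' by (simp add: C3_def)
      then show ?thesis by blast
    next
      assume ee: "(e1,e2,e3) = (1,2,3)"
      obtain x2 y2 f1 f2 f3 where p2: "((x2,y2,0),(f1,f2,f3)) \<in> Q" and h2: "x2 \<le> 1" "1 < x2 + f1" "y2 \<le> 1"
        "1 < y2 + f2" "x2+f1 \<le> 2" "y2+f2 \<le> 3"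
        and o2: "(f1,f2,f3) = (1,2,3) \<or> (f1,f2,f3) = (1,3,2) \<or> (f1,f2,f3) = (2,1,3) \<or> (f1,f2,f3) = (2,3,1)"
        using cov0[OF T, of 1 1] M by auto
      have x2: "x2 = 1"
      proof (rule ccontr)
        assume "x2 \<noteq> 1" then have "x2 = 0" using h2 by simp
        then have "((x2,y2,0),(f1,f2,f3)) = ((x1,y1,0),(e1,e2,e3))" using S[OF p2 p1, of "(0,1,0)"] h2 o2 x1 y1 ee by auto
        then show False using h2 ee \<open>x2 = 0\<close> by simp
      qed
      have y2: "y2 = 1"
      proof (rule ccontr)
        assume "y2 \<noteq> 1" then have "y2 = 0" using h2 by simp
        then have "((x2,y2,0),(f1,f2,f3)) = ((0,0,0),(2,1,3))" using S[OF p2 p0, of "(1,0,0)"] h2 o2 x2 by auto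
        then show False using h2 \<open>y2 = 0\<close> x2 by simp
      qed
      have "(f1,f2,f3) = (1,2,3)" using o2 h2 x2 y2 by auto
      then have "C5 \<subseteq> Q" using p0 p1 p2 x1 y1 ee x2 y2 by (simp add: C5_def)
      then show ?thesis by blast
    qed
  next
    case D
    then have p0: "((0,0,0),(1,2,3)) \<in> Q" using p0 x0 y0 by simp
    obtain x1 y1 e1 e2 e3 where p1: "((x1,y1,0),(e1,e2,e3)) \<in> Q" and h1: "x1 \<le> 1" "1 < x1+e1" "y1 \<le> 0"
      "x1+e1 \<le> 2" "y1+e2 \<le> 3" "e3 \<le> M"
      and o1: "(e1,e2,e3) = (1,2,3) \<or> (e1,e2,e3) = (1,3,2) \<or> (e1,e2,e3) = (2,1,3) \<or> (e1,e2,e3) = (2,3,1)"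
      using cov0[OF T, of 1 0] M by auto
    have y1: "y1 = 0" using h1 by simp
    have x1: "x1 = 1"
    proof (rule ccontr)
      assume "x1 \<noteq> 1" then have "x1 = 0" using h1 by simp
      then have "((x1,y1,0),(e1,e2,e3)) = ((0,0,0),(1,2,3))" using S[OF p1 p0, of "(0,0,0)"] y1 o1 by auto
      then show False using h1 \<open>x1 = 0\<close> by simp
    qed
    have e1: "e1 = 1" using h1 x1 o1 by auto
    obtain x2 y2 f1 f2 f3 where p2: "((x2,y2,0),(f1,f2,f3)) \<in> Q" and h2: "x2 \<le> 0" "y2 \<le> 2"
      "2 < y2 + f2" "x2+f1 \<le> 2" "y2+f2 \<le> 3"
      and o2: "(f1,f2,f3) = (1,2,3) \<or> (f1,f2,f3) = (1,3,2) \<or> (f1,f2,f3) = (2,1,3) \<or> (f1,f2,f3) = (2,3,1)"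
      using cov0[OF T, of 0 2] M by auto
    have x2: "x2 = 0" using h2 by simp
    have y2: "y2 = 2"
    proof (rule ccontr)
      assume "y2 \<noteq> 2" then have "y2 \<le> 1" using h2 by simp
      then have "((x2,y2,0),(f1,f2,f3)) = ((0,0,0),(1,2,3))" using S[OF p2 p0, of "(0,1,0)"] h2 o2 x2 by auto
      then show False using h2 by simp
    qed
    have f: "(f1,f2,f3) = (2,1,3)" using o2 h2 y2 by auto
    have e: "(e1,e2,e3) = (1,2,3)"
    proof (rule ccontr)
      assume "(e1,e2,e3) \<noteq> (1,2,3)"
      then have "(e1,e2,e3) = (1,3,2)" using o1 e1 by auto
      then have "((x2,y2,0),(f1,f2,f3)) = ((x1,y1,0),(e1,e2,e3))" using S[OF p2 p1, of "(1,2,0)"] x1 y1 x2 y2 f by auto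
      then show False using f \<open>(e1,e2,e3) = (1,3,2)\<close> by simp
    qed
    have "C4 \<subseteq> Q" using p0 p1 p2 x1 y1 e x2 y2 f by (simp add: C4_def)
    then show ?thesis by blast
  qed
qed


lemma disjA:
  assumes "p \<in> C" "q \<in> C'" "p \<noteq> q" "c \<in> brick_cells p" "c \<in> brick_cells q"
  shows "{Q. til M Q \<and> C \<subseteq> Q} \<inter> {Q. til M Q \<and> C' \<subseteq> Q} = {}"
  using assms til_disj by blast

lemma card5:
  assumes "finite A" "finite B" "finite C" "finite D" "finite E"
    "A \<inter> B = {}" "A \<inter> C = {}" "A \<inter> D = {}" "A \<inter> E = {}" "B \<inter> C = {}" "B \<inter> D = {}" "B \<inter> E = {}"
    "C \<inter> D = {}" "C \<inter> E = {}" "D \<inter> E = {}"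
  shows "card (A \<union> B \<union> C \<union> D \<union> E) = card A + card B + card C + card D + card E"
proof -
  have "card (A \<union> B) = card A + card B" using assms by (simp add: card_Un_disjoint)
  moreover have "card (A \<union> B \<union> C) = card (A \<union> B) + card C" using assms by (intro card_Un_disjoint) auto
  moreover have "card (A \<union> B \<union> C \<union> D) = card (A \<union> B \<union> C) + card D" using assms by (intro card_Un_disjoint) auto
  moreover have "card (A \<union> B \<union> C \<union> D \<union> E) = card (A \<union> B \<union> C \<union> D) + card E" using assms by (intro card_Un_disjoint) auto
  ultimately show ?thesis by simp
qed

lemma TT_split:
  assumes M: "1 \<le> M"
  shows "TT M = (if 1 \<le> M then TT (M-1) else 0) + (if 2 \<le> M then TT (M-2) else 0)
     + (if 3 \<le> M then TT (M-3) else 0) + (if 3 \<le> M then TT (M-3) else 0) + (if 3 \<le> M then TT (M-3) else 0)"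
proof -
  define A where "A C = {Q. til M Q \<and> C \<subseteq> Q}" for C
  have U: "{Q. til M Q} = A C1 \<union> A C2 \<union> A C3 \<union> A C4 \<union> A C5"
    using exh[OF _ M] unfolding A_def by blast
  have F: "finite (A C)" for C unfolding A_def by (rule finite_subset[OF _ fin_til[of M]]) blast
  have c0: "(0,0,0) \<in> brick_cells ((0,0,0),(a,b,c))" if "a \<ge> 1" "b \<ge> 1" "c \<ge> 1" for a b c :: nat
    using that by simp
  have d12: "A C1 \<inter> A C2 = {}" unfolding A_def
    by (rule disjA[of "((0,0,0),(2,3,1))" _ "((0,0,0),(1,3,2))" _ "(0,0,0)"]) (auto simp: C1_def C2_def)
  have d13: "A C1 \<inter> A C3 = {}" unfolding A_def
    by (rule disjA[of "((0,0,0),(2,3,1))" _ "((0,0,0),(2,1,3))" _ "(0,0,0)"]) (auto simp: C1_def C3_def)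
  have d14: "A C1 \<inter> A C4 = {}" unfolding A_def
    by (rule disjA[of "((0,0,0),(2,3,1))" _ "((0,0,0),(1,2,3))" _ "(0,0,0)"]) (auto simp: C1_def C4_def)
  have d15: "A C1 \<inter> A C5 = {}" unfolding A_def
    by (rule disjA[of "((0,0,0),(2,3,1))" _ "((0,0,0),(2,1,3))" _ "(0,0,0)"]) (auto simp: C1_def C5_def)
  have d23: "A C2 \<inter> A C3 = {}" unfolding A_def
    by (rule disjA[of "((0,0,0),(1,3,2))" _ "((0,0,0),(2,1,3))" _ "(0,0,0)"]) (auto simp: C2_def C3_def)
  have d24: "A C2 \<inter> A C4 = {}" unfolding A_def
    by (rule disjA[of "((0,0,0),(1,3,2))" _ "((0,0,0),(1,2,3))" _ "(0,0,0)"]) (auto simp: C2_def C4_def)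
  have d25: "A C2 \<inter> A C5 = {}" unfolding A_def
    by (rule disjA[of "((0,0,0),(1,3,2))" _ "((0,0,0),(2,1,3))" _ "(0,0,0)"]) (auto simp: C2_def C5_def)
  have d34: "A C3 \<inter> A C4 = {}" unfolding A_def
    by (rule disjA[of "((0,0,0),(2,1,3))" _ "((0,0,0),(1,2,3))" _ "(0,0,0)"]) (auto simp: C3_def C4_def)
  have d35: "A C3 \<inter> A C5 = {}" unfolding A_def
    by (rule disjA[of "((0,1,0),(2,1,3))" _ "((0,1,0),(1,2,3))" _ "(0,1,0)"]) (auto simp: C3_def C5_def)
  have d45: "A C4 \<inter> A C5 = {}" unfolding A_def
    by (rule disjA[of "((0,0,0),(1,2,3))" _ "((0,0,0),(2,1,3))" _ "(0,0,0)"]) (auto simp: C4_def C5_def)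
  have "TT M = card (A C1 \<union> A C2 \<union> A C3 \<union> A C4 \<union> A C5)" unfolding num_tilings_def U ..
  also have "\<dots> = card (A C1) + card (A C2) + card (A C3) + card (A C4) + card (A C5)"
    by (rule card5) (simp_all add: F d12 d13 d14 d15 d23 d24 d25 d34 d35 d45)
  also have "\<dots> = (if 1 \<le> M then TT (M-1) else 0) + (if 2 \<le> M then TT (M-2) else 0)
     + (if 3 \<le> M then TT (M-3) else 0) + (if 3 \<le> M then TT (M-3) else 0) + (if 3 \<le> M then TT (M-3) else 0)"
    unfolding A_def using cfg_card[OF cfg1, of M] cfg_card[OF cfg2, of M] cfg_card[OF cfg3, of M]
      cfg_card[OF cfg4, of M] cfg_card[OF cfg5, of M] by simp
  finally show ?thesis .
qed

lemma rec0: "TT 0 = 1"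
proof -
  have "{Q. til 0 Q} = {{}}"
  proof (intro equalityI subsetI)
    fix Q :: "placement set" assume "Q \<in> {Q. til 0 Q}"
    then have T: "til 0 Q" by simp
    have "p \<notin> Q" for p
    proof
      assume p: "p \<in> Q"
      have "fst p \<in> box 2 3 0" using corner_in[OF til_or[OF T p]] til_sub[OF T p] by blast
      then show False by (cases "fst p") (simp add: mem_box)
    qed
    then show "Q \<in> {{}}" by auto
  next
    fix Q :: "placement set" assume "Q \<in> {{}}"
    then show "Q \<in> {Q. til 0 Q}" by (auto simp: is_tiling_def box_def)
  qed
  then show ?thesis by (simp add: num_tilings_def)
qed

lemma rec1: "TT 1 = 1"
  using TT_split[of 1] rec0 by simp
lemma rec2: "TT 2 = 2"
  using TT_split[of 2] rec0 rec1 by simp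
lemma rec3: "TT (n+3) = TT (n+2) + TT (n+1) + 3 * TT n"
  using TT_split[of "n+3"] by simp


theorem mainTheorem18:
  "Abs_fps (\<lambda>N. of_nat (num_tilings 1 2 3 2 3 N) :: rat)
     = inverse (1 - fps_X - fps_X ^ 2 - 3 * fps_X ^ 3)"
proof -
  define t where "t = TT"
  have t0: "t 0 = 1" and t1: "t 1 = 1" and t2: "t 2 = 2" and t3: "\<And>n. t (n+3) = t (n+2) + t (n+1) + 3 * t n"
    using rec0 rec1 rec2 rec3 by (simp_all add: t_def)
  define a where "a = Abs_fps (\<lambda>N. of_nat (t N) :: rat)"
  have e: "(1 - fps_X - fps_X ^ 2 - 3 * fps_X ^ 3) * a = a - fps_X^1 * a - fps_X^2 * a - 3 * (fps_X^3 * a)"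
    by (simp add: algebra_simps)
  have "a - fps_X^1 * a - fps_X^2 * a - 3 * (fps_X^3 * a) = 1"
  proof (rule fps_ext)
    fix n
    show "(a - fps_X^1 * a - fps_X^2 * a - 3 * (fps_X^3 * a)) $ n = (1::rat fps) $ n"
    proof (cases "n < 3")
      case True
      then have "n = 0 \<or> n = 1 \<or> n = 2" by auto
      then show ?thesis using t0 t1 t2
        by (auto simp: fps_X_power_mult_nth a_def numeral_fps_const simp del: power_one_right)
    next
      case False
      then obtain m where m: "n = m + 3" by (metis add.commute le_Suc_ex not_less)
      show ?thesis using t3[of m]
        by (simp add: m fps_X_power_mult_nth a_def numeral_fps_const del: power_one_right)
    qed
  qed
  then have "(1 - fps_X - fps_X ^ 2 - 3 * fps_X ^ 3) * a = 1" using e by simp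
  then have "inverse (1 - fps_X - fps_X ^ 2 - 3 * fps_X ^ 3) = a" by (rule fps_inverse_unique)
  then show ?thesis by (simp add: a_def t_def)
qed

end
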